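(* Consider the relay problem with $K=2$ slots and message size $B>0$, where the SNR vectors $\boldsymbol\gamma_1=(\gamma^{SR}_1,\gamma^{SD}_1,\gamma^{RD}_1)$ and $\boldsymbol\gamma_2$ are independent with a.s. positive entries. Consider the causal policy: in slot 1 the source transmits with power $p_1=I^{-1}(B)/\max\{\gamma^{SD}_1,\gamma^{SR}_1\}$; if $\gamma^{SD}_1\ge\gamma^{SR}_1$ transmission ends ($p_2=0$); if $\gamma^{SD}_1<\gamma^{SR}_1$, then in slot 2 the node with the larger SNR to the destination transmits with power $p_2=I^{-1}(B-R^{th})/\tilde\gamma_2$, where $R^{th}=I\big(I^{-1}(B)\gamma^{SD}_1/\gamma^{SR}_1\big)$. This policy is feasible (the destination accumulates mutual information at least $B$) and its expected sum energy satisfies $\mathbb{E}[p_1+p_2]\le I^{-1}(B)\Big(\mathbb{E}\Big[\frac{1}{\max\{\gamma^{SD}_1,\gamma^{SR}_1\}}\Big]+\mathbb{E}\Big[\frac{1}{\max\{\gamma^{SD}_2,\gamma^{RD}_2\}}\Big]\Big).$ In particular, if all link SNRs are i.i.d. across links and slots, the expected sum energy is at most $2I^{-1}(B)\,\mathbb{E}[1/\max(\gamma',\gamma'')]$ for independent copies $\gamma',\gamma''$ of a link SNR.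
   Context: Notation: $I(x)=\log(1+x)$, $I^{-1}(x)=e^x-1$, $\tilde\gamma_k=\max(\gamma^{SD}_k,\gamma^{RD}_k)$. In the relay problem, the relay decodes after slot 1 if $I(p_1\gamma^{SR}_1)\ge B$; the destination's accumulated mutual information is $I(p_1\gamma^{SD}_1)$ after slot 1 and, if the relay has decoded, additionally $I(p_2\tilde\gamma_2)$ in slot 2 (otherwise $I(p_2\gamma^{SD}_2)$); the message is delivered if the destination's total is at least $B$. *)

theory Defs
  imports "HOL-Probability.Probability"
begin

definition I :: "real \<Rightarrow> real" where "I x = ln (1 + x)"
definition Iinv :: "real \<Rightarrow> real" where "Iinv x = exp x - 1"

definition pol_p1 :: "real \<Rightarrow> real \<Rightarrow> real \<Rightarrow> real" where
  "pol_p1 B gSR1 gSD1 = Iinv B / max gSD1 gSR1"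

definition R_th :: "real \<Rightarrow> real \<Rightarrow> real \<Rightarrow> real" where
  "R_th B gSR1 gSD1 = I (Iinv B * gSD1 / gSR1)"

definition pol_p2 :: "real \<Rightarrow> real \<Rightarrow> real \<Rightarrow> real \<Rightarrow> real \<Rightarrow> real" where
  "pol_p2 B gSR1 gSD1 gSD2 gRD2 =
     (if gSD1 \<ge> gSR1 then 0
      else Iinv (B - R_th B gSR1 gSD1) / max gSD2 gRD2)"

text \<open>Delivery of the message for powers p1, p2 in the two-slot relay problem:
  the relay decodes after slot 1 iff I(p1 gSR1) \<ge> B; the destination accumulates
  I(p1 gSD1) in slot 1 and I(p2 max(gSD2,gRD2)) in slot 2 if the relay decoded,
  otherwise I(p2 gSD2).\<close>
definition delivered :: "real \<Rightarrow> real \<Rightarrow> real \<Rightarrow> real \<Rightarrow> real \<Rightarrow> real \<Rightarrow> real \<Rightarrow> real \<Rightarrow> real \<Rightarrow> bool" where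
  "delivered B p1 p2 gSR1 gSD1 gRD1 gSR2 gSD2 gRD2 \<longleftrightarrow>
     I (p1 * gSD1) +
       (if I (p1 * gSR1) \<ge> B then I (p2 * max gSD2 gRD2) else I (p2 * gSD2)) \<ge> B"

end

theory Submission
  imports Defs
begin

lemma pair_indep_integral:
  fixes X Y :: "'a \<Rightarrow> real" and f :: "real \<times> real \<Rightarrow> ennreal"
  assumes "prob_space M" and ind: "prob_space.indep_var M borel X borel Y"
    and dX: "distr M borel X = P" and dY: "distr M borel Y = P"
    and f[measurable]: "f \<in> borel_measurable (borel \<Otimes>\<^sub>M borel)"
  shows "(\<integral>\<^sup>+ \<omega>. f (X \<omega>, Y \<omega>) \<partial>M) = (\<integral>\<^sup>+ z. f z \<partial>(P \<Otimes>\<^sub>M P))"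
proof -
  interpret prob_space M by fact
  from ind have rv: "X \<in> borel_measurable M" "Y \<in> borel_measurable M"
    and eq: "distr M borel X \<Otimes>\<^sub>M distr M borel Y = distr M (borel \<Otimes>\<^sub>M borel) (\<lambda>x. (X x, Y x))"
    unfolding indep_var_distribution_eq by auto
  have m: "(\<lambda>x. (X x, Y x)) \<in> measurable M (borel \<Otimes>\<^sub>M borel)" using rv by measurable
  have "(\<integral>\<^sup>+ z. f z \<partial>(P \<Otimes>\<^sub>M P)) = (\<integral>\<^sup>+ z. f z \<partial>distr M (borel \<Otimes>\<^sub>M borel) (\<lambda>x. (X x, Y x)))"
    using eq dX dY by simp
  also have "\<dots> = (\<integral>\<^sup>+ \<omega>. f (X \<omega>, Y \<omega>) \<partial>M)"
    using f by (intro nn_integral_distr[OF m]) simp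
  finally show ?thesis by simp
qed

lemma indep_pair_from_vars:
  assumes "prob_space M" and ind: "prob_space.indep_vars M (\<lambda>_. borel) X K"
    and "i \<in> K" "j \<in> K" "i \<noteq> j"
  shows "prob_space.indep_var M borel (X i) borel (X j)"
proof -
  interpret prob_space M by fact
  have "indep_var (PiM {i} (\<lambda>_. borel)) (\<lambda>\<omega>. restrict (\<lambda>k. X k \<omega>) {i})
                  (PiM {j} (\<lambda>_. borel)) (\<lambda>\<omega>. restrict (\<lambda>k. X k \<omega>) {j})"
    using assms by (intro indep_var_restrict[OF ind]) auto
  from indep_var_compose[OF this measurable_component_singleton[of i "{i}" "\<lambda>_. borel"]
      measurable_component_singleton[of j "{j}" "\<lambda>_. borel"]]
  show ?thesis by (simp add: comp_def)
qed

lemma Iinv_pos: "B > 0 \<Longrightarrow> Iinv B > 0" by (simp add: Iinv_def)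
lemma I_Iinv: "I (Iinv x) = x" by (simp add: I_def Iinv_def)
lemma Iinv_mono: "x \<le> y \<Longrightarrow> Iinv x \<le> Iinv y" by (simp add: Iinv_def)

lemma deliv_pt:
  assumes "B > 0" "0 < a" "0 < b" "0 < c" "0 < d"
  shows "delivered B (pol_p1 B a b) (pol_p2 B a b c d) a b e f c d"
proof (cases "b \<ge> a")
  case True
  have E: "Iinv B > 0" using assms by (simp add: Iinv_pos)
  have "pol_p1 B a b * b = Iinv B" using True assms by (simp add: pol_p1_def max_def)
  hence "I (pol_p1 B a b * b) = B" by (simp add: I_Iinv)
  moreover have "pol_p2 B a b c d = 0" using True by (simp add: pol_p2_def)
  ultimately show ?thesis by (simp add: delivered_def I_def)
next
  case False
  have "pol_p1 B a b * a = Iinv B" using False assms by (simp add: pol_p1_def max_def)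
  hence 1: "I (pol_p1 B a b * a) = B" by (simp add: I_Iinv)
  have 2: "I (pol_p1 B a b * b) = R_th B a b" using False assms
    by (simp add: pol_p1_def R_th_def max_def)
  have "max c d > 0" using assms by simp
  hence "pol_p2 B a b c d * max c d = Iinv (B - R_th B a b)" using False
    by (simp add: pol_p2_def)
  hence 3: "I (pol_p2 B a b c d * max c d) = B - R_th B a b" by (simp add: I_Iinv)
  show ?thesis using 1 2 3 by (simp add: delivered_def)
qed

lemma bound_pt:
  assumes "B > 0" "0 < a" "0 < b" "0 < c" "0 < d"
  shows "pol_p1 B a b + pol_p2 B a b c d \<le> Iinv B * (1 / max b a) + Iinv B * (1 / max c d)"
proof -
  have E: "Iinv B > 0" using assms by (simp add: Iinv_pos)
  have "pol_p2 B a b c d \<le> Iinv B * (1 / max c d)"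
  proof (cases "b \<ge> a")
    case True thus ?thesis using E assms by (simp add: pol_p2_def)
  next
    case False
    have "R_th B a b \<ge> 0" using E assms unfolding R_th_def I_def by simp
    hence "Iinv (B - R_th B a b) \<le> Iinv B" by (intro Iinv_mono) simp
    thus ?thesis using False assms by (simp add: pol_p2_def divide_right_mono)
  qed
  thus ?thesis by (simp add: pol_p1_def)
qed

theorem mainTheorem10:
  fixes M :: "'a measure" and B :: real
    and SR1 SD1 RD1 SR2 SD2 RD2 :: "'a \<Rightarrow> real"
  assumes "prob_space M"
    and "B > 0"
    and "\<forall>X \<in> {SR1, SD1, RD1, SR2, SD2, RD2}. X \<in> borel_measurable M"
    and "prob_space.indep_var M borel (\<lambda>\<omega>. (SR1 \<omega>, SD1 \<omega>, RD1 \<omega>))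
                                borel (\<lambda>\<omega>. (SR2 \<omega>, SD2 \<omega>, RD2 \<omega>))"
    and "AE \<omega> in M. 0 < SR1 \<omega> \<and> 0 < SD1 \<omega> \<and> 0 < RD1 \<omega> \<and>
                     0 < SR2 \<omega> \<and> 0 < SD2 \<omega> \<and> 0 < RD2 \<omega>"
  shows "(AE \<omega> in M. delivered B (pol_p1 B (SR1 \<omega>) (SD1 \<omega>))
                           (pol_p2 B (SR1 \<omega>) (SD1 \<omega>) (SD2 \<omega>) (RD2 \<omega>))
                           (SR1 \<omega>) (SD1 \<omega>) (RD1 \<omega>) (SR2 \<omega>) (SD2 \<omega>) (RD2 \<omega>))
       \<and> (\<integral>\<^sup>+ \<omega>. ennreal (pol_p1 B (SR1 \<omega>) (SD1 \<omega>)
                           + pol_p2 B (SR1 \<omega>) (SD1 \<omega>) (SD2 \<omega>) (RD2 \<omega>)) \<partial>M)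
           \<le> ennreal (Iinv B) *
              ((\<integral>\<^sup>+ \<omega>. ennreal (1 / max (SD1 \<omega>) (SR1 \<omega>)) \<partial>M)
               + (\<integral>\<^sup>+ \<omega>. ennreal (1 / max (SD2 \<omega>) (RD2 \<omega>)) \<partial>M))
       \<and> ((prob_space.indep_vars M (\<lambda>_. borel) (\<lambda>i. [SR1, SD1, RD1, SR2, SD2, RD2] ! i) {..<6}
            \<and> (\<forall>i<6. distr M borel ([SR1, SD1, RD1, SR2, SD2, RD2] ! i) = distr M borel SR1))
          \<longrightarrow> (\<integral>\<^sup>+ \<omega>. ennreal (pol_p1 B (SR1 \<omega>) (SD1 \<omega>)
                           + pol_p2 B (SR1 \<omega>) (SD1 \<omega>) (SD2 \<omega>) (RD2 \<omega>)) \<partial>M)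
              \<le> 2 * ennreal (Iinv B) *
                 (\<integral>\<^sup>+ z. ennreal (1 / max (fst z) (snd z))
                    \<partial>(distr M borel SR1 \<Otimes>\<^sub>M distr M borel SR1)))"
proof -
  interpret prob_space M by fact
  have [measurable]: "SR1 \<in> borel_measurable M" "SD1 \<in> borel_measurable M"
    "SD2 \<in> borel_measurable M" "RD2 \<in> borel_measurable M" using assms(3) by auto
  have E: "Iinv B > 0" using assms(2) by (simp add: Iinv_pos)
  have P1: "AE \<omega> in M. delivered B (pol_p1 B (SR1 \<omega>) (SD1 \<omega>))
                           (pol_p2 B (SR1 \<omega>) (SD1 \<omega>) (SD2 \<omega>) (RD2 \<omega>))
                           (SR1 \<omega>) (SD1 \<omega>) (RD1 \<omega>) (SR2 \<omega>) (SD2 \<omega>) (RD2 \<omega>)"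
    using assms(5) by eventually_elim (intro deliv_pt assms(2), auto)
  have "(\<integral>\<^sup>+ \<omega>. ennreal (pol_p1 B (SR1 \<omega>) (SD1 \<omega>)
                           + pol_p2 B (SR1 \<omega>) (SD1 \<omega>) (SD2 \<omega>) (RD2 \<omega>)) \<partial>M)
     \<le> (\<integral>\<^sup>+ \<omega>. ennreal (Iinv B) * ennreal (1 / max (SD1 \<omega>) (SR1 \<omega>))
              + ennreal (Iinv B) * ennreal (1 / max (SD2 \<omega>) (RD2 \<omega>)) \<partial>M)"
  proof (rule nn_integral_mono_AE)
    show "AE \<omega> in M. ennreal (pol_p1 B (SR1 \<omega>) (SD1 \<omega>)
                           + pol_p2 B (SR1 \<omega>) (SD1 \<omega>) (SD2 \<omega>) (RD2 \<omega>))
       \<le> ennreal (Iinv B) * ennreal (1 / max (SD1 \<omega>) (SR1 \<omega>))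
              + ennreal (Iinv B) * ennreal (1 / max (SD2 \<omega>) (RD2 \<omega>))"
      using assms(5)
    proof eventually_elim
      case (elim \<omega>)
      have "ennreal (pol_p1 B (SR1 \<omega>) (SD1 \<omega>)
                           + pol_p2 B (SR1 \<omega>) (SD1 \<omega>) (SD2 \<omega>) (RD2 \<omega>))
        \<le> ennreal (Iinv B * (1 / max (SD1 \<omega>) (SR1 \<omega>)) + Iinv B * (1 / max (SD2 \<omega>) (RD2 \<omega>)))"
        using elim by (intro ennreal_leI bound_pt assms(2)) auto
      also have "\<dots> = ennreal (Iinv B) * ennreal (1 / max (SD1 \<omega>) (SR1 \<omega>))
              + ennreal (Iinv B) * ennreal (1 / max (SD2 \<omega>) (RD2 \<omega>))"
      proof -
        have m1: "max (SD1 \<omega>) (SR1 \<omega>) > 0" "max (SD2 \<omega>) (RD2 \<omega>) > 0" using elim by auto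
        have a: "ennreal (Iinv B) * ennreal (1 / max (SD1 \<omega>) (SR1 \<omega>)) = ennreal (Iinv B * (1 / max (SD1 \<omega>) (SR1 \<omega>)))"
          using E m1 by (intro ennreal_mult[symmetric]) auto
        have b: "ennreal (Iinv B) * ennreal (1 / max (SD2 \<omega>) (RD2 \<omega>)) = ennreal (Iinv B * (1 / max (SD2 \<omega>) (RD2 \<omega>)))"
          using E m1 by (intro ennreal_mult[symmetric]) auto
        show ?thesis unfolding a b using E m1 by (intro ennreal_plus) auto
      qed
      finally show ?case .
    qed
  qed
  also have "\<dots> = ennreal (Iinv B) *
              ((\<integral>\<^sup>+ \<omega>. ennreal (1 / max (SD1 \<omega>) (SR1 \<omega>)) \<partial>M)
               + (\<integral>\<^sup>+ \<omega>. ennreal (1 / max (SD2 \<omega>) (RD2 \<omega>)) \<partial>M))"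
    by (simp add: nn_integral_add nn_integral_cmult distrib_left)
  finally have P2: "(\<integral>\<^sup>+ \<omega>. ennreal (pol_p1 B (SR1 \<omega>) (SD1 \<omega>)
                           + pol_p2 B (SR1 \<omega>) (SD1 \<omega>) (SD2 \<omega>) (RD2 \<omega>)) \<partial>M)
           \<le> ennreal (Iinv B) *
              ((\<integral>\<^sup>+ \<omega>. ennreal (1 / max (SD1 \<omega>) (SR1 \<omega>)) \<partial>M)
               + (\<integral>\<^sup>+ \<omega>. ennreal (1 / max (SD2 \<omega>) (RD2 \<omega>)) \<partial>M))" .
  have P3: "(\<integral>\<^sup>+ \<omega>. ennreal (pol_p1 B (SR1 \<omega>) (SD1 \<omega>)
                           + pol_p2 B (SR1 \<omega>) (SD1 \<omega>) (SD2 \<omega>) (RD2 \<omega>)) \<partial>M)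
              \<le> 2 * ennreal (Iinv B) *
                 (\<integral>\<^sup>+ z. ennreal (1 / max (fst z) (snd z))
                    \<partial>(distr M borel SR1 \<Otimes>\<^sub>M distr M borel SR1))"
    if H: "indep_vars (\<lambda>_. borel) (\<lambda>i. [SR1, SD1, RD1, SR2, SD2, RD2] ! i) {..<6}"
       "\<forall>i<6. distr M borel ([SR1, SD1, RD1, SR2, SD2, RD2] ! i) = distr M borel SR1"
  proof -
    let ?P = "distr M borel SR1"
    let ?J = "\<integral>\<^sup>+ z. ennreal (1 / max (fst z) (snd z)) \<partial>(?P \<Otimes>\<^sub>M ?P)"
    have fm: "(\<lambda>z::real\<times>real. ennreal (1 / max (fst z) (snd z))) \<in> borel_measurable (borel \<Otimes>\<^sub>M borel)"
      by measurable
    have i1: "indep_var borel SD1 borel SR1"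
      using indep_pair_from_vars[OF prob_space_axioms H(1), of 1 0] by simp
    have i2: "indep_var borel SD2 borel RD2"
      using indep_pair_from_vars[OF prob_space_axioms H(1), of 4 5] by simp
    have d: "distr M borel SD1 = ?P" "distr M borel SD2 = ?P" "distr M borel RD2 = ?P"
      using H(2) by (auto dest: spec[of _ 1] spec[of _ 4] spec[of _ 5])
    have J1: "(\<integral>\<^sup>+ \<omega>. ennreal (1 / max (SD1 \<omega>) (SR1 \<omega>)) \<partial>M) = ?J"
      using pair_indep_integral[OF prob_space_axioms i1 d(1) refl fm] by simp
    have J2: "(\<integral>\<^sup>+ \<omega>. ennreal (1 / max (SD2 \<omega>) (RD2 \<omega>)) \<partial>M) = ?J"
      using pair_indep_integral[OF prob_space_axioms i2 d(2) d(3) fm] by simp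
    have "ennreal (Iinv B) * (?J + ?J) = 2 * ennreal (Iinv B) * ?J"
      by (simp add: mult_2 algebra_simps)
    thus ?thesis using P2 J1 J2 by simp
  qed
  show ?thesis using P1 P2 P3 by blast
qed

end
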